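(* Let $K$ be a number field. Given a finite set of closed points $\{\theta_i\}_{i\in I}$ of $\mathbb{A}^1_K$ with residue fields $K(\theta_i)$, and given for each $i\in I$ a Châtelet surface $\mathcal{S}_i$ defined over $K(\theta_i)$, there exists a Châtelet surface bundle over $\mathbb{A}^1$ defined over $K$ whose fiber at $\theta_i$ is isomorphic to $\mathcal{S}_i$ for every $i\in I$.
   Context: A Châtelet surface over a field $k$ (of characteristic $0$) is the smooth projective surface $\mathcal{S}$ associated with an affine surface $y^2-az^2=P(x)$ in $\mathbb{A}^3$, where $a\in k^*$ is a nonzero constant and $P(x)\in k[x]$ is a separable polynomial of degree $4$; the projective model is obtained by gluing the surface $Y^2-aZ^2=W^2P(x)$ in $(\mathbb{P}^1\setminus\{\infty\})\times\mathbb{P}^2$ with the surface $Y^2-aZ^2=W'^2P^*(x')$ in $(\mathbb{P}^1\setminus\{0\})\times\mathbb{P}^2$ via $x=1/x'$, $W=x'^2W'$, where $P^*(x')=x'^4P(1/x')$. A Châtelet surface bundle over $\mathbb{A}^1$ defined over $K$ is the family of such surfaces parameterised by $t$ given by $y^2-a_tz^2=P_t(x)$ (with the projective model in $\mathbb{A}^1\times\mathbb{P}^1\times\mathbb{P}^2$ obtained by replacing $a$ by $a_t$ and $P$ by $P_t$ in the gluing construction), where $a_t\in K[t]$ is nonzero and $P_t(x)\in K[t,x]$ has degree $4$ in $x$; its fiber at a closed point $\theta$ of $\mathbb{A}^1$ is the surface $y^2-a_\theta z^2=P_\theta(x)$ over the residue field $K(\theta)$. *)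

theory Defs
  imports "HOL-Computational_Algebra.Computational_Algebra"
begin

text \<open>Fields are modelled as subfields of the complex numbers.\<close>

definition subfield :: "complex set \<Rightarrow> bool" where
  "subfield F \<longleftrightarrow> 0 \<in> F \<and> 1 \<in> F \<and>
     (\<forall>x\<in>F. \<forall>y\<in>F. x + y \<in> F \<and> x - y \<in> F \<and> x * y \<in> F) \<and>
     (\<forall>x\<in>F. inverse x \<in> F)"

definition number_field :: "complex set \<Rightarrow> bool" where
  "number_field K \<longleftrightarrow> subfield K \<and>
     (\<exists>B. finite B \<and> B \<subseteq> K \<and>
        (\<forall>x\<in>K. \<exists>c :: complex \<Rightarrow> rat. x = (\<Sum>b\<in>B. of_rat (c b) * b)))"

definition adjoin :: "complex set \<Rightarrow> complex \<Rightarrow> complex set" where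
  "adjoin K \<alpha> = \<Inter>{F. subfield F \<and> K \<subseteq> F \<and> \<alpha> \<in> F}"

definition poly_over :: "complex set \<Rightarrow> complex poly \<Rightarrow> bool" where
  "poly_over L p \<longleftrightarrow> (\<forall>i. coeff p i \<in> L)"

text \<open>Monic irreducible polynomials over K = closed points of the affine line over K.\<close>
definition closed_point :: "complex set \<Rightarrow> complex poly \<Rightarrow> bool" where
  "closed_point K f \<longleftrightarrow> poly_over K f \<and> lead_coeff f = 1 \<and> degree f \<ge> 1 \<and>
     (\<forall>g h. poly_over K g \<and> poly_over K h \<and> f = g * h \<longrightarrow> degree g = 0 \<or> degree h = 0)"

text \<open>Defining data (a, P) of a Chatelet surface y^2 - a z^2 = P(x) over the field L.\<close>
definition chatelet_data :: "complex set \<Rightarrow> complex \<Rightarrow> complex poly \<Rightarrow> bool" where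
  "chatelet_data L a P \<longleftrightarrow> a \<in> L \<and> a \<noteq> 0 \<and> poly_over L P \<and> degree P = 4 \<and> rsquarefree P"

text \<open>Defining data (a_t, P_t) of a Chatelet surface bundle over the affine line over K:
  a_t in K[t] nonzero, P_t in K[t][x] of degree 4 in x.\<close>
definition chatelet_bundle_data :: "complex set \<Rightarrow> complex poly \<Rightarrow> complex poly poly \<Rightarrow> bool" where
  "chatelet_bundle_data K a_t P_t \<longleftrightarrow> poly_over K a_t \<and> a_t \<noteq> 0 \<and>
     (\<forall>i. poly_over K (coeff P_t i)) \<and> degree P_t = 4"

text \<open>Fiber at the closed point with chosen root alpha (residue field K(alpha)).\<close>
definition fiber_a :: "complex poly \<Rightarrow> complex \<Rightarrow> complex" where
  "fiber_a a_t \<alpha> = poly a_t \<alpha>"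

definition fiber_P :: "complex poly poly \<Rightarrow> complex \<Rightarrow> complex poly" where
  "fiber_P P_t \<alpha> = map_poly (\<lambda>c. poly c \<alpha>) P_t"

end

theory Submission imports Defs begin

lemma sf_0: "subfield K \<Longrightarrow> 0 \<in> K" and sf_1: "subfield K \<Longrightarrow> 1 \<in> K"
  and sf_add: "subfield K \<Longrightarrow> x \<in> K \<Longrightarrow> y \<in> K \<Longrightarrow> x + y \<in> K"
  and sf_diff: "subfield K \<Longrightarrow> x \<in> K \<Longrightarrow> y \<in> K \<Longrightarrow> x - y \<in> K"
  and sf_mult: "subfield K \<Longrightarrow> x \<in> K \<Longrightarrow> y \<in> K \<Longrightarrow> x * y \<in> K"
  and sf_inv: "subfield K \<Longrightarrow> x \<in> K \<Longrightarrow> inverse x \<in> K"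
  by (auto simp: subfield_def)

lemma sf_divide: "subfield K \<Longrightarrow> x \<in> K \<Longrightarrow> y \<in> K \<Longrightarrow> x / y \<in> K"
  by (simp add: divide_inverse sf_mult sf_inv)

lemma sf_sum: "subfield K \<Longrightarrow> (\<And>x. x \<in> A \<Longrightarrow> h x \<in> K) \<Longrightarrow> sum h A \<in> K"
  by (induction A rule: infinite_finite_induct) (auto intro: sf_0 sf_add)

lemma po_const: "subfield K \<Longrightarrow> c \<in> K \<Longrightarrow> poly_over K [:c:]"
  by (auto simp: poly_over_def coeff_pCons sf_0 split: nat.splits)

lemma po_0: "subfield K \<Longrightarrow> poly_over K 0"
  by (simp add: poly_over_def sf_0)

lemma po_1: "subfield K \<Longrightarrow> poly_over K 1"
  by (simp add: poly_over_def sf_0 sf_1 coeff_1)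

lemma po_X: "subfield K \<Longrightarrow> poly_over K [:0,1:]"
  by (auto simp: poly_over_def coeff_pCons sf_0 sf_1 split: nat.splits)

lemma po_add: "subfield K \<Longrightarrow> poly_over K p \<Longrightarrow> poly_over K q \<Longrightarrow> poly_over K (p + q)"
  by (simp add: poly_over_def sf_add)

lemma po_diff: "subfield K \<Longrightarrow> poly_over K p \<Longrightarrow> poly_over K q \<Longrightarrow> poly_over K (p - q)"
  by (simp add: poly_over_def sf_diff)

lemma po_mult: "subfield K \<Longrightarrow> poly_over K p \<Longrightarrow> poly_over K q \<Longrightarrow> poly_over K (p * q)"
  unfolding poly_over_def coeff_mult by (auto intro!: sf_sum sf_mult)

lemma po_smult: "subfield K \<Longrightarrow> c \<in> K \<Longrightarrow> poly_over K q \<Longrightarrow> poly_over K (smult c q)"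
  by (simp add: poly_over_def sf_mult)

lemma po_monom: "subfield K \<Longrightarrow> c \<in> K \<Longrightarrow> poly_over K (monom c n)"
  by (simp add: poly_over_def coeff_monom sf_0)

lemma po_sum: "subfield K \<Longrightarrow> (\<And>x. x \<in> A \<Longrightarrow> poly_over K (h x)) \<Longrightarrow> poly_over K (sum h A)"
  by (induction A rule: infinite_finite_induct) (auto intro: po_0 po_add)

lemma po_prod: "subfield K \<Longrightarrow> (\<And>x. x \<in> A \<Longrightarrow> poly_over K (h x)) \<Longrightarrow> poly_over K (prod h A)"
  by (induction A rule: infinite_finite_induct) (auto intro: po_1 po_mult)

lemma po_lead: "poly_over K p \<Longrightarrow> lead_coeff p \<in> K"
  by (simp add: poly_over_def)

lemma po_divmod:
  assumes K: "subfield K" and d: "poly_over K d" "d \<noteq> 0"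
  shows "poly_over K p \<Longrightarrow> \<exists>q r. poly_over K q \<and> poly_over K r \<and> p = q * d + r \<and> (r = 0 \<or> degree r < degree d)"
proof (induction "degree p" arbitrary: p rule: less_induct)
  case less
  show ?case
  proof (cases "p = 0 \<or> degree p < degree d")
    case True
    then show ?thesis using less.prems by (intro exI[of _ 0] exI[of _ p]) (auto simp: po_0 K)
  next
    case False
    hence p0: "p \<noteq> 0" and le: "degree d \<le> degree p" by auto
    define c where "c = lead_coeff p / lead_coeff d"
    define k where "k = degree p - degree d"
    define m where "m = monom c k * d"
    have cK: "c \<in> K" unfolding c_def by (intro sf_divide K po_lead less.prems d)
    have c0: "c \<noteq> 0" using p0 d by (simp add: c_def)
    have dm: "degree m = degree p" unfolding m_def using c0 d le
      by (simp add: degree_mult_eq degree_monom_eq k_def)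
    have lm: "lead_coeff m = lead_coeff p" unfolding m_def lead_coeff_mult lead_coeff_monom using d
      by (simp add: c_def)
    have mK: "poly_over K m" unfolding m_def by (intro po_mult K po_monom cK d)
    define p' where "p' = p - m"
    have p'K: "poly_over K p'" unfolding p'_def by (intro po_diff K less.prems mK)
    have cp: "coeff p' (degree p) = 0" unfolding p'_def using dm lm by simp
    have dle: "degree p' \<le> degree p" unfolding p'_def using dm by (intro degree_diff_le) auto
    show ?thesis
    proof (cases "p' = 0")
      case True
      then show ?thesis using mK
        by (intro exI[of _ "monom c k"] exI[of _ 0]) (auto simp: po_0 K po_monom cK p'_def m_def)
    next
      case False
      hence "degree p' < degree p" using cp dle
        by (metis le_neq_implies_less leading_coeff_0_iff)
      from less.hyps[OF this p'K] obtain q r where qr: "poly_over K q" "poly_over K r" "p' = q * d + r"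
        "r = 0 \<or> degree r < degree d" by blast
      show ?thesis
        by (intro exI[of _ "q + monom c k"] exI[of _ r])
          (use qr in \<open>auto simp: po_add K po_monom cK p'_def m_def algebra_simps\<close>)
    qed
  qed
qed

lemma cp_facts: "closed_point K f \<Longrightarrow> poly_over K f \<and> f \<noteq> 0 \<and> degree f \<ge> 1"
  by (auto simp: closed_point_def)

lemma cp_alt:
  assumes K: "subfield K" and f: "closed_point K f" and g: "poly_over K g"
  shows "f dvd g \<or> (\<exists>u v. poly_over K u \<and> poly_over K v \<and> u * f + v * g = 1)"
proof -
  have fK: "poly_over K f" and f0: "f \<noteq> 0" using cp_facts[OF f] by auto
  define D where "D = {d. d \<noteq> 0 \<and> (\<exists>u v. poly_over K u \<and> poly_over K v \<and> d = u * f + v * g)}"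
  have "f \<in> D" unfolding D_def using f0 po_0[OF K] po_1[OF K]
    by (intro CollectI conjI exI[of _ 1] exI[of _ 0]) auto
  then obtain d where dD: "d \<in> D" and dmin: "\<And>d'. d' \<in> D \<Longrightarrow> degree d \<le> degree d'"
    using ex_has_least_nat[of "\<lambda>d. d \<in> D" f degree] by blast
  from dD obtain u v where uv: "poly_over K u" "poly_over K v" "d = u * f + v * g" and d0: "d \<noteq> 0"
    unfolding D_def by blast
  have dK: "poly_over K d" using uv by (simp add: po_add po_mult K fK g)
  have divs: "\<exists>q. poly_over K q \<and> p = q * d"
    if "poly_over K u'" "poly_over K v'" "p = u' * f + v' * g" for p u' v'
  proof -
    have pK: "poly_over K p" using that by (simp add: po_add po_mult K fK g)
    obtain q r where qr: "poly_over K q" "poly_over K r" "p = q * d + r" "r = 0 \<or> degree r < degree d"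
      using po_divmod[OF K dK d0 pK] by blast
    have e: "r = p - q * d" using qr(3) by simp
    have "r = (u' * f + v' * g) - q * (u * f + v * g)" using e unfolding that(3) uv(3) .
    also have "\<dots> = (u' - q * u) * f + (v' - q * v) * g" by (simp add: algebra_simps)
    finally have "r = (u' - q * u) * f + (v' - q * v) * g" .
    moreover have "poly_over K (u' - q * u)" "poly_over K (v' - q * v)"
      using that(1,2) uv(1,2) qr(1) by (auto intro!: po_diff po_mult K)
    ultimately have "r \<noteq> 0 \<Longrightarrow> r \<in> D" unfolding D_def by blast
    have "r = 0"
    proof (rule ccontr)
      assume "r \<noteq> 0"
      hence "r \<in> D" using \<open>r \<noteq> 0 \<Longrightarrow> r \<in> D\<close> by blast
      hence "degree d \<le> degree r" by (rule dmin)
      with qr(4) \<open>r \<noteq> 0\<close> show False by simp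
    qed
    hence "p = q * d" using qr(3) by simp
    thus ?thesis using qr(1) by blast
  qed
  have "f = 1 * f + 0 * g" by simp
  from divs[OF po_1[OF K] po_0[OF K] this] obtain q where q: "poly_over K q" "f = q * d" by blast
  have irr: "\<forall>g h. poly_over K g \<and> poly_over K h \<and> f = g * h \<longrightarrow> degree g = 0 \<or> degree h = 0"
    using f unfolding closed_point_def by (elim conjE) assumption
  have "degree q = 0 \<or> degree d = 0" using irr[rule_format, OF conjI[OF q(1) conjI[OF dK q(2)]]] .
  thus ?thesis
  proof
    assume dq: "degree q = 0"
    obtain c where c: "q = [:c:]" using dq by (rule degree_eq_zeroE)
    have c0: "c \<noteq> 0" using c q f0 by auto
    have "g = 0 * f + 1 * g" by simp
    from divs[OF po_0[OF K] po_1[OF K] this] obtain q' where q': "g = q' * d" by blast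
    have "d = smult (inverse c) f" using q c c0 by simp
    hence "g = f * smult (inverse c) q'" using q' by (simp add: algebra_simps)
    thus ?thesis by (intro disjI1) (rule dvdI)
  next
    assume dd: "degree d = 0"
    obtain c where c: "d = [:c:]" using dd by (rule degree_eq_zeroE)
    have c0: "c \<noteq> 0" using c d0 by auto
    have cK: "c \<in> K" using dK c by (metis coeff_pCons_0 poly_over_def)
    have "smult (inverse c) u * f + smult (inverse c) v * g = smult (inverse c) d"
      unfolding uv(3) by (simp add: smult_add_right)
    also have "\<dots> = 1" using c c0 by (simp add: one_pCons)
    finally show ?thesis using uv cK
      by (intro disjI2 exI[of _ "smult (inverse c) u"] exI[of _ "smult (inverse c) v"])
        (auto intro!: po_smult K sf_inv)
  qed
qed

lemma cp_inverse:
  assumes K: "subfield K" and f: "closed_point K f" and r: "poly f \<alpha> = 0"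
    and g: "poly_over K g" and g0: "poly g \<alpha> \<noteq> 0"
  shows "\<exists>v. poly_over K v \<and> poly v \<alpha> * poly g \<alpha> = 1"
proof -
  have "\<not> f dvd g"
  proof
    assume "f dvd g"
    then obtain k where "g = f * k" by (rule dvdE)
    hence "poly g \<alpha> = 0" using r by simp
    thus False using g0 by contradiction
  qed
  then obtain u v where "poly_over K u" "poly_over K v" "u * f + v * g = 1"
    using cp_alt[OF K f g] by blast
  hence "poly v \<alpha> * poly g \<alpha> = 1" using r
    by (metis add_0 mult_zero_right poly_1 poly_add poly_mult)
  thus ?thesis using \<open>poly_over K v\<close> by blast
qed

lemma cp_unique:
  assumes K: "subfield K" and f1: "closed_point K f1" and f2: "closed_point K f2"
    and r1: "poly f1 \<alpha> = 0" and r2: "poly f2 \<alpha> = 0"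
  shows "f1 = f2"
proof -
  have d12: "f1 dvd f2"
  proof -
    { fix u v assume "u * f1 + v * f2 = 1"
      hence "poly (u * f1 + v * f2) \<alpha> = 1" by simp
      hence False using r1 r2 by simp }
    thus ?thesis using cp_alt[OF K f1 cp_facts[OF f2, THEN conjunct1]] by blast
  qed
  have d21: "f2 dvd f1"
  proof -
    { fix u v assume "u * f2 + v * f1 = 1"
      hence "poly (u * f2 + v * f1) \<alpha> = 1" by simp
      hence False using r1 r2 by simp }
    thus ?thesis using cp_alt[OF K f2 cp_facts[OF f1, THEN conjunct1]] by blast
  qed
  have n1: "f1 \<noteq> 0" and n2: "f2 \<noteq> 0" using cp_facts[OF f1] cp_facts[OF f2] by auto
  have deq: "degree f1 = degree f2" using d12 d21 n1 n2
    by (meson dvd_imp_degree_le le_antisym)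
  obtain q where q: "f2 = f1 * q" using d12 by (auto elim!: dvdE)
  have q0: "q \<noteq> 0" using q n2 by auto
  have "degree q = 0" using deq q n1 q0 by (simp add: degree_mult_eq)
  then obtain c where c: "q = [:c:]" by (rule degree_eq_zeroE)
  have "lead_coeff f2 = lead_coeff f1 * lead_coeff q" using q by (simp add: lead_coeff_mult)
  moreover have "lead_coeff f1 = 1" "lead_coeff f2 = 1" using f1 f2 unfolding closed_point_def by blast+
  ultimately have "c = 1" using c by simp
  thus ?thesis using q c by (simp add: one_pCons[symmetric])
qed


lemma adjoin_sub:
  assumes K: "subfield K" and f: "closed_point K f" and r: "poly f \<alpha> = 0"
  shows "adjoin K \<alpha> \<subseteq> {poly g \<alpha> | g. poly_over K g}"
proof -
  define S where "S = {poly g \<alpha> | g. poly_over K g}"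
  have sub: "subfield S" unfolding subfield_def
  proof (intro conjI ballI)
    show "0 \<in> S" unfolding S_def using po_0[OF K] by force
    show "1 \<in> S" unfolding S_def using po_1[OF K] by force
  next
    fix x y assume "x \<in> S" "y \<in> S"
    then obtain g1 g2 where g: "poly_over K g1" "poly_over K g2" "x = poly g1 \<alpha>" "y = poly g2 \<alpha>"
      unfolding S_def by blast
    have "x + y = poly (g1 + g2) \<alpha>" "x - y = poly (g1 - g2) \<alpha>" "x * y = poly (g1 * g2) \<alpha>"
      using g by auto
    thus "x + y \<in> S" "x - y \<in> S" "x * y \<in> S" unfolding S_def
      using po_add[OF K g(1,2)] po_diff[OF K g(1,2)] po_mult[OF K g(1,2)] by blast+
  next
    fix x assume "x \<in> S"
    then obtain g where g: "poly_over K g" "x = poly g \<alpha>" unfolding S_def by blast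
    show "inverse x \<in> S"
    proof (cases "x = 0")
      case True
      then show ?thesis unfolding S_def using po_0[OF K] by force
    next
      case False
      then obtain v where v: "poly_over K v" "poly v \<alpha> * poly g \<alpha> = 1"
        using cp_inverse[OF K f r g(1)] g(2) by blast
      hence "inverse x = poly v \<alpha>" using g(2) by (metis inverse_unique mult.commute)
      thus ?thesis unfolding S_def using v(1) by blast
    qed
  qed
  have "K \<subseteq> S"
  proof
    fix c assume "c \<in> K"
    hence "poly_over K [:c:]" by (rule po_const[OF K])
    moreover have "c = poly [:c:] \<alpha>" by simp
    ultimately show "c \<in> S" unfolding S_def by blast
  qed
  moreover have "\<alpha> \<in> S"
  proof -
    have "\<alpha> = poly [:0,1:] \<alpha>" by simp
    thus ?thesis unfolding S_def using po_X[OF K] by blast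
  qed
  ultimately have "S \<in> {F. subfield F \<and> K \<subseteq> F \<and> \<alpha> \<in> F}" using sub by blast
  hence "adjoin K \<alpha> \<subseteq> S" unfolding adjoin_def by (rule Inter_lower)
  thus ?thesis unfolding S_def .
qed

lemma interp:
  assumes K: "subfield K" and I: "finite I"
    and f: "\<And>i. i \<in> I \<Longrightarrow> closed_point K (f i)" and inj: "inj_on f I"
    and r: "\<And>i. i \<in> I \<Longrightarrow> poly (f i) (\<alpha> i) = 0"
    and b: "\<And>i. i \<in> I \<Longrightarrow> b i \<in> adjoin K (\<alpha> i)"
  shows "\<exists>h. poly_over K h \<and> (\<forall>i\<in>I. poly h (\<alpha> i) = b i)"
proof -
  have "\<forall>i\<in>I. \<exists>g. poly_over K g \<and> poly g (\<alpha> i) = b i"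
  proof
    fix i assume i: "i \<in> I"
    have "b i \<in> {poly g (\<alpha> i) | g. poly_over K g}" using adjoin_sub[OF K f[OF i] r[OF i]] b[OF i] by (rule subsetD)
    hence "\<exists>g. b i = poly g (\<alpha> i) \<and> poly_over K g" unfolding mem_Collect_eq .
    then obtain g where H: "b i = poly g (\<alpha> i) \<and> poly_over K g" by (rule exE)
    show "\<exists>g. poly_over K g \<and> poly g (\<alpha> i) = b i"
      by (rule exI[of _ g], rule conjI[OF conjunct2[OF H] conjunct1[OF H, symmetric]])
  qed
  from bchoice[OF this] obtain G where G0: "\<forall>i\<in>I. poly_over K (G i) \<and> poly (G i) (\<alpha> i) = b i"
    by (elim exE)
  have G: "\<And>i. i \<in> I \<Longrightarrow> poly_over K (G i) \<and> poly (G i) (\<alpha> i) = b i" using G0 by (rule bspec)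
  have ne: "poly (f j) (\<alpha> i) \<noteq> 0" if "i \<in> I" "j \<in> I" "j \<noteq> i" for i j
  proof
    assume "poly (f j) (\<alpha> i) = 0"
    hence "f j = f i" using cp_unique[OF K f[OF that(2)] f[OF that(1)] _ r[OF that(1)]] by blast
    thus False using inj that unfolding inj_on_def by blast
  qed
  define E where "E i = (\<Prod>j\<in>I-{i}. f j)" for i
  have EK: "poly_over K (E i)" for i unfolding E_def
    by (rule po_prod[OF K]) (use f cp_facts in auto)
  have E0: "poly (E i) (\<alpha> i) \<noteq> 0" if "i \<in> I" for i
    unfolding E_def poly_prod using ne[OF that] I by (simp add: prod_zero_iff)
  have Ez: "poly (E i) (\<alpha> k) = 0" if "i \<in> I" "k \<in> I" "k \<noteq> i" for i k
  proof -
    have "k \<in> I - {i}" using that by blast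
    thus ?thesis unfolding E_def poly_prod using I r[OF that(2)] by (metis finite_Diff prod_zero_iff)
  qed
  have "\<forall>i\<in>I. \<exists>v. poly_over K v \<and> poly v (\<alpha> i) * poly (E i) (\<alpha> i) = 1"
  proof
    fix i assume i: "i \<in> I"
    show "\<exists>v. poly_over K v \<and> poly v (\<alpha> i) * poly (E i) (\<alpha> i) = 1"
      by (rule cp_inverse[OF K f[OF i] r[OF i] EK E0[OF i]])
  qed
  from bchoice[OF this] obtain V where V0: "\<forall>i\<in>I. poly_over K (V i) \<and> poly (V i) (\<alpha> i) * poly (E i) (\<alpha> i) = 1"
    by (elim exE)
  have V: "\<And>i. i \<in> I \<Longrightarrow> poly_over K (V i) \<and> poly (V i) (\<alpha> i) * poly (E i) (\<alpha> i) = 1" using V0 by (rule bspec)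
  define h where "h = (\<Sum>i\<in>I. G i * V i * E i)"
  have "poly_over K h" unfolding h_def
    by (rule po_sum[OF K]) (intro po_mult[OF K] EK, use G V in auto)
  moreover have "poly h (\<alpha> k) = b k" if k: "k \<in> I" for k
  proof -
    have "poly h (\<alpha> k) = (\<Sum>i\<in>I. poly (G i) (\<alpha> k) * poly (V i) (\<alpha> k) * poly (E i) (\<alpha> k))"
      unfolding h_def poly_sum by simp
    also have "\<dots> = poly (G k) (\<alpha> k) * poly (V k) (\<alpha> k) * poly (E k) (\<alpha> k)
       + (\<Sum>i\<in>I-{k}. poly (G i) (\<alpha> k) * poly (V i) (\<alpha> k) * poly (E i) (\<alpha> k))"
      using sum.remove[OF I k] by blast
    also have "(\<Sum>i\<in>I-{k}. poly (G i) (\<alpha> k) * poly (V i) (\<alpha> k) * poly (E i) (\<alpha> k)) = 0"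
      using Ez k by (intro sum.neutral) auto
    also have "poly (G k) (\<alpha> k) * poly (V k) (\<alpha> k) * poly (E k) (\<alpha> k) = b k"
      using G[OF k] V[OF k] by (simp add: mult.assoc)
    finally show ?thesis by simp
  qed
  ultimately show ?thesis by blast
qed


theorem proposition3p3:
  fixes K :: "complex set" and I :: "'i set"
    and f :: "'i \<Rightarrow> complex poly" and \<alpha> :: "'i \<Rightarrow> complex"
    and a :: "'i \<Rightarrow> complex" and P :: "'i \<Rightarrow> complex poly"
  assumes "number_field K"
    and "finite I"
    and "\<And>i. i \<in> I \<Longrightarrow> closed_point K (f i)"
    and "inj_on f I"
    and "\<And>i. i \<in> I \<Longrightarrow> poly (f i) (\<alpha> i) = 0"
    and "\<And>i. i \<in> I \<Longrightarrow> chatelet_data (adjoin K (\<alpha> i)) (a i) (P i)"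
  shows "\<exists>a_t P_t. chatelet_bundle_data K a_t P_t \<and>
           (\<forall>i\<in>I. fiber_a a_t (\<alpha> i) = a i \<and> fiber_P P_t (\<alpha> i) = P i)"
proof (cases "I = {}")
  case True
  have K: "subfield K" using assms(1) unfolding number_field_def by (elim conjE)
  have "chatelet_bundle_data K 1 (monom 1 4)"
    unfolding chatelet_bundle_data_def
  proof (intro conjI allI)
    show "poly_over K 1" by (rule po_1[OF K])
    fix i show "poly_over K (coeff (monom (1::complex poly) 4) i)"
      by (simp add: coeff_monom po_1[OF K] po_0[OF K])
  qed (simp_all add: degree_monom_eq)
  thus ?thesis using True by blast
next
  case False
  have K: "subfield K" using assms(1) unfolding number_field_def by (elim conjE)
  have cd: "a i \<in> adjoin K (\<alpha> i)" "a i \<noteq> 0" "poly_over (adjoin K (\<alpha> i)) (P i)" "degree (P i) = 4"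
    if "i \<in> I" for i using assms(6)[OF that] unfolding chatelet_data_def by blast+
  obtain A where A: "poly_over K A" "\<forall>i\<in>I. poly A (\<alpha> i) = a i"
    using interp[OF K assms(2,3,4,5) cd(1)] by blast
  have "\<forall>k. \<exists>h. poly_over K h \<and> (\<forall>i\<in>I. poly h (\<alpha> i) = coeff (P i) k)"
  proof
    fix k
    have ck: "coeff (P i) k \<in> adjoin K (\<alpha> i)" if "i \<in> I" for i
      using cd(3)[OF that] unfolding poly_over_def by (rule spec)
    show "\<exists>h. poly_over K h \<and> (\<forall>i\<in>I. poly h (\<alpha> i) = coeff (P i) k)"
      by (rule interp[OF K assms(2,3,4,5) ck])
  qed
  then obtain H where H: "\<And>k. poly_over K (H k)" "\<And>k i. i \<in> I \<Longrightarrow> poly (H k) (\<alpha> i) = coeff (P i) k"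
    by (metis (no_types))
  obtain i0 where i0: "i0 \<in> I" using False by blast
  define Pt where "Pt = (\<Sum>k\<le>4. monom (H k) k)"
  have cPt: "coeff Pt n = (if n \<le> 4 then H n else 0)" for n
    unfolding Pt_def coeff_sum coeff_monom by (simp add: sum.delta)
  have A0: "A \<noteq> 0"
  proof
    assume "A = 0"
    hence "a i0 = 0" using A(2) i0 by simp
    thus False using cd(2)[OF i0] by contradiction
  qed
  have H4: "H 4 \<noteq> 0"
  proof
    assume "H 4 = 0"
    hence "coeff (P i0) 4 = 0" using H(2)[OF i0, of 4] by simp
    hence "P i0 = 0 \<or> degree (P i0) \<noteq> 4" by (metis leading_coeff_0_iff)
    thus False using cd(4)[OF i0] by simp
  qed
  have dPt: "degree Pt = 4"
  proof (rule antisym)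
    show "degree Pt \<le> 4" by (rule degree_le) (simp add: cPt)
    show "4 \<le> degree Pt" by (rule le_degree) (simp add: cPt H4)
  qed
  have bd: "chatelet_bundle_data K A Pt"
    unfolding chatelet_bundle_data_def
  proof (intro conjI allI)
    fix i show "poly_over K (coeff Pt i)" by (simp add: cPt H(1) po_0[OF K])
  qed (use A A0 dPt in auto)
  have "fiber_a A (\<alpha> i) = a i \<and> fiber_P Pt (\<alpha> i) = P i" if i: "i \<in> I" for i
  proof
    show "fiber_a A (\<alpha> i) = a i" unfolding fiber_a_def using A(2) i by blast
    show "fiber_P Pt (\<alpha> i) = P i" unfolding fiber_P_def
    proof (rule poly_eqI)
      fix n
      have "coeff (map_poly (\<lambda>c. poly c (\<alpha> i)) Pt) n = poly (coeff Pt n) (\<alpha> i)"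
        by (rule coeff_map_poly) simp
      also have "\<dots> = coeff (P i) n"
      proof (cases "n \<le> 4")
        case True
        then show ?thesis using H(2)[OF i] by (simp add: cPt)
      next
        case False
        then show ?thesis using cd(4)[OF i] by (simp add: cPt coeff_eq_0)
      qed
      finally show "coeff (map_poly (\<lambda>c. poly c (\<alpha> i)) Pt) n = coeff (P i) n" .
    qed
  qed
  thus ?thesis using bd by blast
qed

end
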